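(* Let $n\geq 0$ and $k\geq 1$ be integers with $k\not\equiv 1 \pmod 3$. Then $\gcd(B_{k,n},C_{k,n})=1$.
   Context: For an integer $k\geq 1$, the generalized balancing numbers are defined by $B_{k,0}=0$, $B_{k,1}=1$ and $B_{k,n}=3kB_{k,n-1}+(1-k)B_{k,n-2}$ for $n\geq 2$; the generalized balancing-Lucas numbers are defined by $C_{k,0}=1$, $C_{k,1}=3$ and $C_{k,n}=3kC_{k,n-1}+(1-k)C_{k,n-2}$ for $n\geq 2$. *)

theory Defs
  imports Main
begin

fun genB :: "int \<Rightarrow> nat \<Rightarrow> int" where
  "genB k 0 = 0"
| "genB k (Suc 0) = 1"
| "genB k (Suc (Suc n)) = 3 * k * genB k (Suc n) + (1 - k) * genB k n"

fun genC :: "int \<Rightarrow> nat \<Rightarrow> int" where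
  "genC k 0 = 1"
| "genC k (Suc 0) = 3"
| "genC k (Suc (Suc n)) = 3 * k * genC k (Suc n) + (1 - k) * genC k n"

end

theory Submission
  imports Defs
begin

lemma Bmod: "(k - 1) dvd (genB k (Suc n) - 3 ^ n)"
proof (induction n)
  case 0 then show ?case by simp
next
  case (Suc n)
  have e: "genB k (Suc (Suc n)) - 3 ^ Suc n
      = (k - 1) * (3 * genB k (Suc n) - genB k n) + 3 * (genB k (Suc n) - 3 ^ n)"
    by (simp add: algebra_simps)
  have "(k - 1) dvd 3 * (genB k (Suc n) - 3 ^ n)" using Suc by (rule dvd_mult)
  then show ?case unfolding e by (simp add: dvd_add)
qed

lemma C_eq2: "genC k n = genB k (Suc n) + 3 * (1 - k) * genB k n \<and>
   genC k (Suc n) = genB k (Suc (Suc n)) + 3 * (1 - k) * genB k (Suc n)"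
proof (induction n)
  case 0 then show ?case by simp
next
  case (Suc n)
  define a where "a = genB k n"
  define b where "b = genB k (Suc n)"
  define c where "c = genB k (Suc (Suc n))"
  define d where "d = genB k (Suc (Suc (Suc n)))"
  have c: "c = 3 * k * b + (1 - k) * a" unfolding a_def b_def c_def by simp
  have d: "d = 3 * k * c + (1 - k) * b" unfolding d_def b_def c_def by simp
  have i1: "genC k n = b + 3 * (1 - k) * a" using Suc unfolding a_def b_def by blast
  have i2: "genC k (Suc n) = c + 3 * (1 - k) * b" using Suc unfolding c_def b_def by blast
  have g: "genC k (Suc (Suc n)) = 3 * k * genC k (Suc n) + (1 - k) * genC k n" by simp
  have "genC k (Suc (Suc n)) = d + 3 * (1 - k) * c"
    unfolding g i1 i2 d c by (simp add: algebra_simps)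
  then show ?case using i2 unfolding c_def d_def b_def by simp
qed

lemma C_eq: "genC k n = genB k (Suc n) + 3 * (1 - k) * genB k n"
  using C_eq2 by blast

lemma cop_am: "coprime (m::int) (k*m + n) = coprime m n"
  by (simp add: coprime_iff_gcd_eq_1 gcd_add_mult)

lemma cop3: assumes "k mod 3 \<noteq> (1::int)" shows "coprime (k - 1) 3"
proof -
  define r where "r = (k - 1) mod 3"
  define q where "q = (k - 1) div 3"
  have kr: "k - 1 = q * 3 + r" unfolding r_def q_def by simp
  have "r = 1 \<or> r = 2" using assms unfolding r_def by presburger
  moreover have "coprime (2::int) 3" using cop_am[of 2 1 1] by simp
  ultimately have "coprime 3 r" by (auto simp: coprime_commute)
  then have "coprime 3 (q * 3 + r)" by (simp add: cop_am)
  then show ?thesis unfolding kr by (simp add: coprime_commute)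
qed

lemma copk: assumes "k mod 3 \<noteq> (1::int)" shows "coprime (k - 1) (genB k (Suc n))"
proof -
  obtain t where t: "genB k (Suc n) - 3 ^ n = (k - 1) * t" using Bmod by (metis dvdE)
  have "coprime (k - 1) (3 ^ n)" using cop3[OF assms] by simp
  then have "coprime (k - 1) (t * (k - 1) + 3 ^ n)" by (simp add: cop_am)
  moreover have "genB k (Suc n) = t * (k - 1) + 3 ^ n" using t by (simp add: algebra_simps)
  ultimately show ?thesis by simp
qed

lemma copB: assumes "k mod 3 \<noteq> (1::int)" shows "coprime (genB k (Suc n)) (genB k n)"
proof (induction n)
  case 0 then show ?case by simp
next
  case (Suc n)
  have e: "genB k (Suc (Suc n)) = (3 * k) * genB k (Suc n) + (1 - k) * genB k n" by simp
  have "coprime (k - 1) (genB k (Suc n))" using copk[OF assms, of n] .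
  then have "coprime (1 - k) (genB k (Suc n))"
    by (metis coprime_minus_left_iff minus_diff_eq)
  then have "coprime ((1 - k) * genB k n) (genB k (Suc n))"
    using Suc by (simp add: coprime_commute)
  then have "coprime (genB k (Suc n)) ((3 * k) * genB k (Suc n) + (1 - k) * genB k n)"
    by (simp add: cop_am coprime_commute)
  then show ?case unfolding e by (simp add: coprime_commute)
qed

theorem mainTheorem13:
  fixes k :: int and n :: nat
  assumes "k \<ge> 1" and "k mod 3 \<noteq> 1"
  shows "gcd (genB k n) (genC k n) = 1"
proof -
  have "coprime (genB k n) (genB k (Suc n) + 3 * (1 - k) * genB k n)"
    using copB[OF assms(2), of n] cop_am[of "genB k n" "3 * (1 - k)" "genB k (Suc n)"]
    by (simp add: coprime_commute add.commute)
  then show ?thesis by (simp add: C_eq)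
qed

end
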